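(* Let $R$ be an integral domain with field of fractions $F$, $A$ a unital $R$-algebra, $P$ a right $A$-module, and $N_1\subseteq N_2$ left $A$-modules with inclusion $\iota:N_1\to N_2$. Suppose that $A\otimes_RF$ is semisimple and that $N_2$ and $P\otimes_AN_1$ are free $R$-modules. Then $\mathrm{id}_P\otimes\iota:P\otimes_AN_1\to P\otimes_AN_2$ is injective. *)

theory Defs
  imports Main "HOL-Library.Poly_Mapping" "HOL-Computational_Algebra.Fraction_Field"
begin

(* Unital R-algebra structure on a ring 'a: a unital ring hom R -> centre(A). *)
definition central_alg :: "('r::comm_ring_1 \<Rightarrow> 'a::ring_1) \<Rightarrow> bool" where
  "central_alg alg \<longleftrightarrow> alg 1 = 1 \<and> (\<forall>r s. alg (r + s) = alg r + alg s)
     \<and> (\<forall>r s. alg (r * s) = alg r * alg s) \<and> (\<forall>r a. alg r * a = a * alg r)"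

definition right_module :: "('p::ab_group_add \<Rightarrow> 'a::ring_1 \<Rightarrow> 'p) \<Rightarrow> bool" where
  "right_module pa \<longleftrightarrow> (\<forall>x y a. pa (x + y) a = pa x a + pa y a)
     \<and> (\<forall>x a b. pa x (a + b) = pa x a + pa x b)
     \<and> (\<forall>x a b. pa x (a * b) = pa (pa x a) b) \<and> (\<forall>x. pa x 1 = x)"

definition left_module :: "('a::ring_1 \<Rightarrow> 'n::ab_group_add \<Rightarrow> 'n) \<Rightarrow> bool" where
  "left_module na \<longleftrightarrow> (\<forall>x y a. na a (x + y) = na a x + na a y)
     \<and> (\<forall>x a b. na (a + b) x = na a x + na b x)
     \<and> (\<forall>x a b. na (a * b) x = na a (na b x)) \<and> (\<forall>x. na 1 x = x)"

definition left_submodule :: "('a::ring_1 \<Rightarrow> 'n::ab_group_add \<Rightarrow> 'n) \<Rightarrow> 'n set \<Rightarrow> bool" where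
  "left_submodule na N \<longleftrightarrow> 0 \<in> N \<and> (\<forall>x\<in>N. \<forall>y\<in>N. x + y \<in> N)
     \<and> (\<forall>x\<in>N. - x \<in> N) \<and> (\<forall>a. \<forall>x\<in>N. na a x \<in> N)"

(* Tensor product P \<otimes>_B N (P right B-module via ra, N \<subseteq> a left B-module via la):
   formal Z-linear combinations of pairs (p,n) with n \<in> N, modulo the subgroup
   generated by the bilinearity and balancing relations. *)
inductive_set tens_rel :: "('p::ab_group_add \<Rightarrow> 'b \<Rightarrow> 'p) \<Rightarrow> ('b \<Rightarrow> 'n::ab_group_add \<Rightarrow> 'n)
    \<Rightarrow> 'n set \<Rightarrow> (('p \<times> 'n) \<Rightarrow>\<^sub>0 int) set"
  for ra la N where
  rel_add_l: "n \<in> N \<Longrightarrow> Poly_Mapping.single (p + p', n) 1 - Poly_Mapping.single (p, n) 1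
                - Poly_Mapping.single (p', n) 1 \<in> tens_rel ra la N"
| rel_add_r: "n \<in> N \<Longrightarrow> n' \<in> N \<Longrightarrow> Poly_Mapping.single (p, n + n') 1
                - Poly_Mapping.single (p, n) 1 - Poly_Mapping.single (p, n') 1 \<in> tens_rel ra la N"
| rel_bal: "n \<in> N \<Longrightarrow> Poly_Mapping.single (ra p b, n) 1 - Poly_Mapping.single (p, la b n) 1
                \<in> tens_rel ra la N"
| rel_zero: "0 \<in> tens_rel ra la N"
| rel_plus: "x \<in> tens_rel ra la N \<Longrightarrow> y \<in> tens_rel ra la N \<Longrightarrow> x + y \<in> tens_rel ra la N"
| rel_neg: "x \<in> tens_rel ra la N \<Longrightarrow> - x \<in> tens_rel ra la N"

definition tens_sums :: "'n set \<Rightarrow> (('p \<times> 'n) \<Rightarrow>\<^sub>0 int) set" where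
  "tens_sums N = {x. Poly_Mapping.keys x \<subseteq> UNIV \<times> N}"

definition tensor :: "('p::ab_group_add \<Rightarrow> 'b \<Rightarrow> 'p) \<Rightarrow> ('b \<Rightarrow> 'n::ab_group_add \<Rightarrow> 'n)
    \<Rightarrow> 'n set \<Rightarrow> (('p \<times> 'n) \<Rightarrow>\<^sub>0 int) set set" where
  "tensor ra la N = (\<lambda>x. (+) x ` tens_rel ra la N) ` tens_sums N"

(* id_P \<otimes> inclusion: sends the class of x in P \<otimes> N1 to the class of x in P \<otimes> N2 *)
definition tensor_incl :: "('p::ab_group_add \<Rightarrow> 'b \<Rightarrow> 'p) \<Rightarrow> ('b \<Rightarrow> 'n::ab_group_add \<Rightarrow> 'n)
    \<Rightarrow> 'n set \<Rightarrow> (('p \<times> 'n) \<Rightarrow>\<^sub>0 int) set \<Rightarrow> (('p \<times> 'n) \<Rightarrow>\<^sub>0 int) set" where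
  "tensor_incl ra la N2 C = (\<Union>y\<in>C. (+) y ` tens_rel ra la N2)"

definition scal_l :: "('p \<Rightarrow> 'b \<Rightarrow> 'p) \<Rightarrow> 'b \<Rightarrow> (('p \<times> 'n) \<Rightarrow>\<^sub>0 int) \<Rightarrow> (('p \<times> 'n) \<Rightarrow>\<^sub>0 int)" where
  "scal_l ra b x = (\<Sum>k\<in>Poly_Mapping.keys x. Poly_Mapping.single (ra (fst k) b, snd k) (Poly_Mapping.lookup x k))"

(* M/K is a free R-module (R acting by smult on M, preserving K):
   there is a set B \<subseteq> M whose classes form a basis of M/K. *)
definition free_quot :: "('r::comm_ring_1 \<Rightarrow> 'm::ab_group_add \<Rightarrow> 'm) \<Rightarrow> 'm set \<Rightarrow> 'm set \<Rightarrow> bool" where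
  "free_quot smult M K \<longleftrightarrow> (\<exists>B \<subseteq> M.
     (\<forall>x\<in>M. \<exists>c. finite {b\<in>B. c b \<noteq> 0} \<and> x - (\<Sum>b\<in>{b\<in>B. c b \<noteq> 0}. smult (c b) b) \<in> K) \<and>
     (\<forall>c. finite {b\<in>B. c b \<noteq> 0} \<longrightarrow> (\<Sum>b\<in>{b\<in>B. c b \<noteq> 0}. smult (c b) b) \<in> K
          \<longrightarrow> (\<forall>b\<in>B. c b = 0)))"

definition tmult :: "(('a::ring_1 \<times> 'f::field) \<Rightarrow>\<^sub>0 int) \<Rightarrow> (('a \<times> 'f) \<Rightarrow>\<^sub>0 int) \<Rightarrow> (('a \<times> 'f) \<Rightarrow>\<^sub>0 int)" where
  "tmult x y = (\<Sum>k\<in>Poly_Mapping.keys x. \<Sum>l\<in>Poly_Mapping.keys y.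
      Poly_Mapping.single (fst k * fst l, snd k * snd l) (Poly_Mapping.lookup x k * Poly_Mapping.lookup y l))"

(* left ideals of the quotient ring M/K, represented by their preimages L with K \<subseteq> L \<subseteq> M *)
definition quot_left_ideal :: "('m::ab_group_add \<Rightarrow> 'm \<Rightarrow> 'm) \<Rightarrow> 'm set \<Rightarrow> 'm set \<Rightarrow> 'm set \<Rightarrow> bool" where
  "quot_left_ideal mult M K L \<longleftrightarrow> K \<subseteq> L \<and> L \<subseteq> M \<and> (\<forall>x\<in>L. \<forall>y\<in>L. x + y \<in> L)
     \<and> (\<forall>x\<in>L. - x \<in> L) \<and> (\<forall>x\<in>M. \<forall>y\<in>L. mult x y \<in> L)"

(* the ring M/K is semisimple: every left ideal is a direct summand of the regular module *)
definition semisimple_quot :: "('m::ab_group_add \<Rightarrow> 'm \<Rightarrow> 'm) \<Rightarrow> 'm set \<Rightarrow> 'm set \<Rightarrow> bool" where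
  "semisimple_quot mult M K \<longleftrightarrow> (\<forall>L. quot_left_ideal mult M K L \<longrightarrow>
     (\<exists>L'. quot_left_ideal mult M K L' \<and> L \<inter> L' = K \<and> (\<forall>x\<in>M. \<exists>y\<in>L. \<exists>z\<in>L'. x = y + z)))"

definition base_change_semisimple :: "('r::idom \<Rightarrow> 'a::ring_1) \<Rightarrow> bool" where
  "base_change_semisimple alg \<longleftrightarrow>
     semisimple_quot (tmult :: (('a \<times> 'r fract) \<Rightarrow>\<^sub>0 int) \<Rightarrow> _) UNIV
       (tens_rel (\<lambda>a r. a * alg r) (\<lambda>r f. Fract r 1 * f) UNIV)"

end

theory Submission
  imports Defs "HOL-Library.Function_Algebras"
begin


lemma pm_decomp: "(x::'k \<Rightarrow>\<^sub>0 'b::comm_monoid_add) = (\<Sum>k\<in>Poly_Mapping.keys x. Poly_Mapping.single k (Poly_Mapping.lookup x k))"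
proof (rule poly_mapping_eqI)
  fix j
  show "Poly_Mapping.lookup x j = Poly_Mapping.lookup (\<Sum>k\<in>Poly_Mapping.keys x. Poly_Mapping.single k (Poly_Mapping.lookup x k)) j"
    by (auto simp: lookup_sum lookup_single when_def in_keys_iff)
qed

lemma tmult_expand:
  assumes "finite X" "Poly_Mapping.keys x \<subseteq> X" "finite Y" "Poly_Mapping.keys y \<subseteq> Y"
  shows "tmult x y = (\<Sum>k\<in>X. \<Sum>l\<in>Y. Poly_Mapping.single (fst k * fst l, snd k * snd l) (Poly_Mapping.lookup x k * Poly_Mapping.lookup y l))"
proof -
  have "tmult x y = (\<Sum>k\<in>X. \<Sum>l\<in>Poly_Mapping.keys y. Poly_Mapping.single (fst k * fst l, snd k * snd l) (Poly_Mapping.lookup x k * Poly_Mapping.lookup y l))"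
    unfolding tmult_def using assms by (intro sum.mono_neutral_left) (auto simp: in_keys_iff)
  also have "\<dots> = (\<Sum>k\<in>X. \<Sum>l\<in>Y. Poly_Mapping.single (fst k * fst l, snd k * snd l) (Poly_Mapping.lookup x k * Poly_Mapping.lookup y l))" using assms
    by (intro sum.cong refl sum.mono_neutral_left) (auto simp: in_keys_iff)
  finally show ?thesis .
qed

lemma tmult_add_left: "tmult (x + x') y = tmult x y + tmult x' y"
proof -
  let ?X = "Poly_Mapping.keys x \<union> Poly_Mapping.keys x'"
  have k: "Poly_Mapping.keys (x + x') \<subseteq> ?X" by (rule keys_add)
  show ?thesis
    by (subst (1 2 3) tmult_expand[where X="?X" and Y="Poly_Mapping.keys y"])
       (use k in \<open>auto simp: lookup_add distrib_right single_add sum.distrib\<close>)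
qed

lemma tmult_add_right: "tmult x (y + y') = tmult x y + tmult x y'"
proof -
  let ?Y = "Poly_Mapping.keys y \<union> Poly_Mapping.keys y'"
  have k: "Poly_Mapping.keys (y + y') \<subseteq> ?Y" by (rule keys_add)
  show ?thesis
    by (subst (1 2 3) tmult_expand[where Y="?Y" and X="Poly_Mapping.keys x"])
       (use k in \<open>auto simp: lookup_add distrib_left single_add sum.distrib\<close>)
qed

lemma tmult_zero_left [simp]: "tmult 0 y = 0" by (simp add: tmult_def)
lemma tmult_zero_right [simp]: "tmult x 0 = 0" by (simp add: tmult_def)

lemma tmult_minus_left: "tmult (- x) y = - tmult x y"
  by (metis add_eq_0_iff tmult_add_left tmult_zero_left neg_eq_iff_add_eq_0)
lemma tmult_minus_right: "tmult x (- y) = - tmult x y"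
  by (metis add_eq_0_iff tmult_add_right tmult_zero_right neg_eq_iff_add_eq_0)
lemma tmult_diff_left: "tmult (x - x') y = tmult x y - tmult x' y"
  by (metis diff_conv_add_uminus tmult_add_left tmult_minus_left)
lemma tmult_diff_right: "tmult x (y - y') = tmult x y - tmult x y'"
  by (metis diff_conv_add_uminus tmult_add_right tmult_minus_right)

lemma tmult_sum_left: "tmult (sum f A) y = (\<Sum>a\<in>A. tmult (f a) y)"
  by (induction A rule: infinite_finite_induct) (auto simp: tmult_add_left)
lemma tmult_sum_right: "tmult y (sum f A) = (\<Sum>a\<in>A. tmult y (f a))"
  by (induction A rule: infinite_finite_induct) (auto simp: tmult_add_right)

lemma tmult_single: "tmult (Poly_Mapping.single k c) (Poly_Mapping.single l d) = Poly_Mapping.single (fst k * fst l, snd k * snd l) (c * d)"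
  by (subst tmult_expand[where X="{k}" and Y="{l}"]) auto

lemma tmult_assoc: "tmult (tmult x y) z = tmult x (tmult y z)"
proof -
  have "tmult (tmult x y) z = tmult (tmult (\<Sum>k\<in>Poly_Mapping.keys x. Poly_Mapping.single k (Poly_Mapping.lookup x k))
       (\<Sum>k\<in>Poly_Mapping.keys y. Poly_Mapping.single k (Poly_Mapping.lookup y k)))
       (\<Sum>k\<in>Poly_Mapping.keys z. Poly_Mapping.single k (Poly_Mapping.lookup z k))"
    by (simp flip: pm_decomp)
  also have "\<dots> = tmult (\<Sum>k\<in>Poly_Mapping.keys x. Poly_Mapping.single k (Poly_Mapping.lookup x k))
       (tmult (\<Sum>k\<in>Poly_Mapping.keys y. Poly_Mapping.single k (Poly_Mapping.lookup y k))
       (\<Sum>k\<in>Poly_Mapping.keys z. Poly_Mapping.single k (Poly_Mapping.lookup z k)))"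
    by (simp add: tmult_sum_left tmult_sum_right tmult_single mult.assoc)
  also have "\<dots> = tmult x (tmult y z)" by (simp flip: pm_decomp)
  finally show ?thesis .
qed

abbreviation "one1 \<equiv> Poly_Mapping.single (1,1) (1::int)"

lemma tmult_one_left [simp]: "tmult one1 x = x"
proof -
  have "tmult one1 (\<Sum>k\<in>Poly_Mapping.keys x. Poly_Mapping.single k (Poly_Mapping.lookup x k)) = (\<Sum>k\<in>Poly_Mapping.keys x. Poly_Mapping.single k (Poly_Mapping.lookup x k))"
    by (simp add: tmult_sum_right tmult_single)
  then show ?thesis by (simp flip: pm_decomp)
qed

lemma tmult_one_right [simp]: "tmult x one1 = x"
proof -
  have "tmult (\<Sum>k\<in>Poly_Mapping.keys x. Poly_Mapping.single k (Poly_Mapping.lookup x k)) one1 = (\<Sum>k\<in>Poly_Mapping.keys x. Poly_Mapping.single k (Poly_Mapping.lookup x k))"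
    by (simp add: tmult_sum_left tmult_single)
  then show ?thesis by (simp flip: pm_decomp)
qed



lemma tr_diff: "x \<in> tens_rel ra la N \<Longrightarrow> y \<in> tens_rel ra la N \<Longrightarrow> x - y \<in> tens_rel ra la N"
  by (metis diff_conv_add_uminus tens_rel.rel_plus tens_rel.rel_neg)

lemma tr_sum: "(\<And>a. a \<in> A \<Longrightarrow> f a \<in> tens_rel ra la N) \<Longrightarrow> sum f A \<in> tens_rel ra la N"
  by (induction A rule: infinite_finite_induct) (auto intro: tens_rel.intros)

lemma tr_cmul_nat: "x \<in> tens_rel ra la N \<Longrightarrow> frag_cmul (int n) x \<in> tens_rel ra la N"
proof (induction n)
  case 0 then show ?case by (simp add: tens_rel.rel_zero)
next
  case (Suc n)
  have "frag_cmul (int (Suc n)) x = x + frag_cmul (int n) x"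
    by (simp add: frag_cmul_distrib)
  then show ?case using Suc by (simp add: tens_rel.rel_plus)
qed

lemma tr_cmul: assumes "x \<in> tens_rel ra la N" shows "frag_cmul c x \<in> tens_rel ra la N"
proof (cases "c \<ge> 0")
  case True
  then obtain n where "c = int n" using nonneg_int_cases by blast
  then show ?thesis using tr_cmul_nat assms by simp
next
  case False
  then have "c = - int (nat (- c))" by simp
  then obtain n where "c = - int n" by blast
  have "- frag_cmul (int n) x \<in> tens_rel ra la N" by (rule tens_rel.rel_neg[OF tr_cmul_nat[OF assms]])
  then show ?thesis using \<open>c = - int n\<close> by simp
qed

lemma frag_cmul_single: "frag_cmul c (Poly_Mapping.single m d) = Poly_Mapping.single m (c * d)"
  by (rule poly_mapping_eqI) (simp add: lookup_single when_def)

lemma tmult_single_cmul: "tmult (Poly_Mapping.single k c) y = frag_cmul c (tmult (Poly_Mapping.single k 1) y)"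
  by (simp add: tmult_expand[where X="{k}" and Y="Poly_Mapping.keys y"] frag_cmul_sum frag_cmul_single)

abbreviation KK :: "('r::idom \<Rightarrow> 'a::ring_1) \<Rightarrow> (('a \<times> 'r fract) \<Rightarrow>\<^sub>0 int) set" where
  "KK alg \<equiv> tens_rel (\<lambda>a r. a * alg r) (\<lambda>r f. Fract r 1 * f) UNIV"

lemma KK_single_mult:
  assumes "g \<in> KK alg" "central_alg alg"
  shows "tmult (Poly_Mapping.single k 1) g \<in> KK alg"
  using assms(1)
proof (induction rule: tens_rel.induct)
  case (rel_add_l n p p')
  then show ?case
    using tens_rel.rel_add_l[where n="snd k * n" and N=UNIV and p="fst k * p" and p'="fst k * p'"]
    by (simp add: tmult_diff_right tmult_single distrib_left)
next
  case (rel_add_r n n' p)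
  then show ?case
    using tens_rel.rel_add_r[where n="snd k * n" and N=UNIV and n'="snd k * n'" and p="fst k * p"]
    by (simp add: tmult_diff_right tmult_single distrib_left)
next
  case (rel_bal n p b)
  then show ?case
    using tens_rel.rel_bal[where n="snd k * n" and N=UNIV and p="fst k * p" and b=b and ra="\<lambda>a r. a * alg r" and la="\<lambda>r f. Fract r 1 * f"]
    by (simp add: tmult_diff_right tmult_single ac_simps)
next
  case rel_zero then show ?case by (simp add: tens_rel.rel_zero)
next
  case (rel_plus x y) then show ?case by (simp add: tmult_add_right tens_rel.rel_plus)
next
  case (rel_neg x) then show ?case by (simp add: tmult_minus_right tens_rel.rel_neg)
qed

lemma KK_left_ideal:
  assumes "g \<in> KK alg" "central_alg alg"
  shows "tmult x g \<in> KK alg"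
proof -
  have "tmult x g = (\<Sum>k\<in>Poly_Mapping.keys x. tmult (Poly_Mapping.single k (Poly_Mapping.lookup x k)) g)"
  proof -
    have "tmult x g = tmult (\<Sum>k\<in>Poly_Mapping.keys x. Poly_Mapping.single k (Poly_Mapping.lookup x k)) g"
      by (simp flip: pm_decomp)
    then show ?thesis by (simp only: tmult_sum_left)
  qed
  also have "\<dots> \<in> KK alg"
    by (rule tr_sum, subst tmult_single_cmul, rule tr_cmul, rule KK_single_mult[OF assms])
  finally show ?thesis .
qed



definition vec :: "nat \<Rightarrow> (nat \<Rightarrow> ('a \<times> 'f) \<Rightarrow>\<^sub>0 int) set" where
  "vec k = {v. \<forall>i\<ge>k. v i = 0}"

definition smul :: "(('a::ring_1 \<times> 'f::field) \<Rightarrow>\<^sub>0 int) \<Rightarrow> (nat \<Rightarrow> ('a \<times> 'f) \<Rightarrow>\<^sub>0 int) \<Rightarrow> (nat \<Rightarrow> ('a \<times> 'f) \<Rightarrow>\<^sub>0 int)" where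
  "smul x v = (\<lambda>i. tmult x (v i))"

lemma smul_apply: "smul x v i = tmult x (v i)" by (simp add: smul_def)

definition Kv :: "('r::idom \<Rightarrow> 'a::ring_1) \<Rightarrow> (nat \<Rightarrow> ('a \<times> 'r fract) \<Rightarrow>\<^sub>0 int) set" where
  "Kv alg = {v. \<forall>i. v i \<in> KK alg}"

lemma smul_add: "smul x (v + w) = smul x v + smul x w"
  by (rule ext) (simp add: tmult_add_right smul_apply)
lemma smul_diff: "smul x (v - w) = smul x v - smul x w"
  by (rule ext) (simp add: tmult_diff_right smul_apply)
lemma smul_add_left: "smul (x + y) v = smul x v + smul y v"
  by (rule ext) (simp add: tmult_add_left smul_apply)
lemma smul_smul: "smul x (smul y v) = smul (tmult x y) v"
  by (rule ext) (simp add: tmult_assoc smul_apply)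

lemma Kv_add: "v \<in> Kv alg \<Longrightarrow> w \<in> Kv alg \<Longrightarrow> v + w \<in> Kv alg"
  by (simp add: Kv_def tens_rel.rel_plus)

lemma split_vec:
  fixes alg :: "'r::idom \<Rightarrow> 'a::ring_1"
  assumes ss: "base_change_semisimple alg" and cen: "central_alg alg"
  shows "W \<subseteq> vec k \<Longrightarrow> vec k \<inter> Kv alg \<subseteq> W \<Longrightarrow> (\<forall>v\<in>W. \<forall>w\<in>W. v + w \<in> W) \<Longrightarrow> (\<forall>v\<in>W. - v \<in> W)
    \<Longrightarrow> (\<forall>x. \<forall>v\<in>W. smul x v \<in> W) \<Longrightarrow>
    \<exists>q. (\<forall>v\<in>vec k. q v \<in> W) \<and> (\<forall>w\<in>W. w - q w \<in> Kv alg) \<and>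
        (\<forall>v\<in>vec k. \<forall>w\<in>vec k. q (v + w) = q v + q w) \<and> (\<forall>x. \<forall>v\<in>vec k. q (smul x v) = smul x (q v))"
proof (induction k arbitrary: W)
  case 0
  have v0: "vec 0 = {0}" by (auto simp: vec_def)
  have "0 \<in> Kv alg" by (simp add: Kv_def tens_rel.rel_zero)
  then have "0 \<in> W" using 0 v0 by auto
  then show ?case using 0 v0
    by (intro exI[of _ "\<lambda>v. v"]) (auto simp: Kv_def tens_rel.rel_zero)
next
  case (Suc k)
  note WS = Suc.prems
  have vsub: "vec k \<subseteq> vec (Suc k)" by (auto simp: vec_def)
  have vadd: "\<And>v w. v \<in> vec j \<Longrightarrow> w \<in> vec j \<Longrightarrow> v + w \<in> vec j" for j by (auto simp: vec_def)
  have vneg: "\<And>v. v \<in> vec j \<Longrightarrow> - v \<in> vec j" for j by (auto simp: vec_def)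
  have vsm: "\<And>v x. v \<in> vec j \<Longrightarrow> smul x v \<in> vec j" for j by (auto simp: vec_def smul_apply)
  have Wdiff: "\<And>v w. v \<in> W \<Longrightarrow> w \<in> W \<Longrightarrow> v - w \<in> W"
    using WS(3,4) by (metis diff_conv_add_uminus)
  define W1 where "W1 = W \<inter> vec k"
  have "\<exists>q. (\<forall>v\<in>vec k. q v \<in> W1) \<and> (\<forall>w\<in>W1. w - q w \<in> Kv alg) \<and>
        (\<forall>v\<in>vec k. \<forall>w\<in>vec k. q (v + w) = q v + q w) \<and> (\<forall>x. \<forall>v\<in>vec k. q (smul x v) = smul x (q v))"
  proof (rule Suc.IH)
    show "W1 \<subseteq> vec k" unfolding W1_def by auto
    show "vec k \<inter> Kv alg \<subseteq> W1" unfolding W1_def using WS(2) vsub by auto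
    show "\<forall>v\<in>W1. \<forall>w\<in>W1. v + w \<in> W1" unfolding W1_def using WS(3) vadd by blast
    show "\<forall>v\<in>W1. - v \<in> W1" unfolding W1_def using WS(4) vneg by blast
    show "\<forall>x. \<forall>v\<in>W1. smul x v \<in> W1" unfolding W1_def using WS(5) vsm by blast
  qed
  then obtain q1 where q1W: "\<And>v. v\<in>vec k \<Longrightarrow> q1 v \<in> W1" and q1K: "\<And>w. w\<in>W1 \<Longrightarrow> w - q1 w \<in> Kv alg"
    and q1add: "\<And>v w. v\<in>vec k \<Longrightarrow> w\<in>vec k \<Longrightarrow> q1 (v + w) = q1 v + q1 w"
    and q1sm: "\<And>x v. v\<in>vec k \<Longrightarrow> q1 (smul x v) = smul x (q1 v)" by blast
  define I where "I = (\<lambda>v. v k) ` W"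
  have delta: "(\<lambda>i. if i = k then c else 0) \<in> W" if "c \<in> KK alg" for c
    using WS(2) that by (auto simp: vec_def Kv_def tens_rel.rel_zero)
  have IL: "quot_left_ideal tmult UNIV (KK alg) I"
    unfolding quot_left_ideal_def
  proof (intro conjI ballI subsetI)
    fix c assume "c \<in> KK alg"
    have "(\<lambda>i. if i = k then c else 0) \<in> W" using delta \<open>c \<in> KK alg\<close> by blast
    then show "c \<in> I" unfolding I_def
      using image_eqI[where f="\<lambda>v. v k" and x="\<lambda>i. if i = k then c else 0" and A=W] by simp
  next
    fix x y assume "x \<in> I" "y \<in> I"
    then obtain v w where "v \<in> W" "w \<in> W" "x = v k" "y = w k" unfolding I_def by auto
    then show "x + y \<in> I" unfolding I_def using WS(3) using image_eqI[where f="\<lambda>v. v k" and x="v + w" and A=W] by simp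
  next
    fix x assume "x \<in> I"
    then obtain v where "v \<in> W" "x = v k" unfolding I_def by auto
    then show "- x \<in> I" unfolding I_def using WS(4) using image_eqI[where f="\<lambda>v. v k" and x="- v" and A=W] by simp
  next
    fix x y assume "y \<in> I"
    then obtain v where "v \<in> W" "y = v k" unfolding I_def by auto
    then show "tmult x y \<in> I" unfolding I_def using WS(5) using image_eqI[where f="\<lambda>v. v k" and x="smul x v" and A=W] by (simp add: smul_apply)
  qed auto
  obtain L' where L': "quot_left_ideal tmult UNIV (KK alg) L'" "I \<inter> L' = KK alg"
      "\<forall>x\<in>UNIV. \<exists>y\<in>I. \<exists>z\<in>L'. x = y + z"
  proof -
    have "semisimple_quot tmult UNIV (KK alg)" using ss unfolding base_change_semisimple_def .
    then have "\<exists>L'. quot_left_ideal tmult UNIV (KK alg) L' \<and> I \<inter> L' = KK alg \<and> (\<forall>x\<in>UNIV. \<exists>y\<in>I. \<exists>z\<in>L'. x = y + z)"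
      unfolding semisimple_quot_def using IL by blast
    then show ?thesis using that by blast
  qed
  obtain e e' where e: "e \<in> I" "e' \<in> L'" "one1 = e + e'" using L'(3) by blast
  have Iadd: "\<And>x y. x \<in> I \<Longrightarrow> y \<in> I \<Longrightarrow> x + y \<in> I" and Ineg: "\<And>x. x \<in> I \<Longrightarrow> - x \<in> I"
    and Imul: "\<And>x y. y \<in> I \<Longrightarrow> tmult x y \<in> I"
    using IL unfolding quot_left_ideal_def by auto
  have base: "x - tmult x e \<in> KK alg" if "x \<in> I" for x
  proof -
    have "x = tmult x one1" by simp
    also have "\<dots> = tmult x e + tmult x e'" using e by (simp add: tmult_add_right)
    finally have eq: "x - tmult x e = tmult x e'" by (simp add: algebra_simps)
    have "tmult x e' \<in> L'" using L'(1) e unfolding quot_left_ideal_def by auto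
    moreover have "x - tmult x e \<in> I" using Iadd Ineg Imul that e(1) by (metis diff_conv_add_uminus)
    ultimately show ?thesis using eq L'(2) by auto
  qed
  obtain we where we: "we \<in> W" "we k = e" using e(1) unfolding I_def by auto
  define q where "q = (\<lambda>v. smul (tmult (v k) e) we + q1 ((v - smul (tmult (v k) e) we)(k := 0)))"
  have weS: "we \<in> vec (Suc k)" using we WS(1) by auto
  have u'vec: "(v - smul (tmult (v k) e) we)(k := 0) \<in> vec k" if "v \<in> vec (Suc k)" for v
    using that weS by (auto simp: vec_def smul_apply)
  have P1: "\<forall>v\<in>vec (Suc k). q v \<in> W"
  proof
    fix v :: "nat \<Rightarrow> ('a \<times> 'r fract) \<Rightarrow>\<^sub>0 int" assume v: "v \<in> vec (Suc k)"
    have "q1 ((v - smul (tmult (v k) e) we)(k := 0)) \<in> W" using q1W[OF u'vec[OF v]] W1_def by auto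
    moreover have "smul (tmult (v k) e) we \<in> W" using WS(5) we by auto
    ultimately show "q v \<in> W" unfolding q_def using WS(3) by blast
  qed
  have P2: "\<forall>w\<in>W. w - q w \<in> Kv alg"
  proof
    fix w assume w: "w \<in> W"
    define t where "t = tmult (w k) e"
    define u where "u = w - smul t we"
    have wk: "w k \<in> I" using w I_def by auto
    have uW: "u \<in> W" unfolding u_def using Wdiff w WS(5) we by auto
    have "u k = (w k - tmult (w k) e) + tmult (w k) (e - tmult e e)"
      by (simp add: smul_apply u_def t_def we tmult_diff_right tmult_assoc)
    moreover have "e - tmult e e \<in> KK alg" using base e(1) by auto
    ultimately have ukK: "u k \<in> KK alg"
      using base[OF wk] KK_left_ideal[OF _ cen] by (simp add: smul_apply tens_rel.rel_plus)
    define d where "d = (\<lambda>i. if i = k then u k else 0)"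
    have dW: "d \<in> W" using delta[OF ukK] d_def by simp
    have dK: "d \<in> Kv alg" using ukK by (simp add: smul_apply d_def Kv_def tens_rel.rel_zero)
    have u'eq: "u(k := 0) = u - d" by (rule ext) (simp add: smul_apply d_def)
    have wS: "w \<in> vec (Suc k)" using w WS(1) by auto
    have u'W1: "u(k := 0) \<in> W1" unfolding W1_def
      using u'eq Wdiff[OF uW dW] u'vec[OF wS] by (simp add: smul_apply u_def t_def)
    have "w - q w = d + (u(k := 0) - q1 (u(k := 0)))"
      by (simp add: smul_apply q_def u_def t_def u'eq[unfolded u_def t_def])
    then show "w - q w \<in> Kv alg" using Kv_add[OF dK q1K[OF u'W1]] by simp
  qed
  have P3: "\<forall>v\<in>vec (Suc k). \<forall>w\<in>vec (Suc k). q (v + w) = q v + q w"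
  proof (intro ballI)
    fix v w :: "nat \<Rightarrow> ('a \<times> 'r fract) \<Rightarrow>\<^sub>0 int" assume v: "v \<in> vec (Suc k)" and w: "w \<in> vec (Suc k)"
    have e1: "(v + w - smul (tmult ((v + w) k) e) we)(k := 0) =
        (v - smul (tmult (v k) e) we)(k := 0) + (w - smul (tmult (w k) e) we)(k := 0)"
      by (rule ext) (simp add: smul_apply tmult_add_left)
    show "q (v + w) = q v + q w"
      unfolding q_def e1 using q1add[OF u'vec[OF v] u'vec[OF w]]
      by (simp add: smul_apply tmult_add_left smul_add_left)
  qed
  have P4: "\<forall>x. \<forall>v\<in>vec (Suc k). q (smul x v) = smul x (q v)"
  proof (intro allI ballI)
    fix x and v :: "nat \<Rightarrow> ('a \<times> 'r fract) \<Rightarrow>\<^sub>0 int" assume v: "v \<in> vec (Suc k)"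
    have e1: "(smul x v - smul (tmult (smul x v k) e) we)(k := 0) =
        smul x ((v - smul (tmult (v k) e) we)(k := 0))"
      by (rule ext) (simp add: smul_apply tmult_diff_right tmult_assoc)
    show "q (smul x v) = smul x (q v)"
      unfolding q_def e1 using q1sm[OF u'vec[OF v]]
      by (simp add: smul_apply smul_add smul_smul tmult_assoc)
  qed
  show ?case using P1 P2 P3 P4 by blast
qed



definition scl :: "'f::field \<Rightarrow> ('n \<Rightarrow>\<^sub>0 'f) \<Rightarrow> ('n \<Rightarrow>\<^sub>0 'f)" where
  "scl c v = Poly_Mapping.map ((*) c) v"

lemma lookup_scl [simp]: "Poly_Mapping.lookup (scl c v) k = c * Poly_Mapping.lookup v k"
  by (simp add: scl_def map.rep_eq when_def)

lemma scl_add: "scl c (v + w) = scl c v + scl c w"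
  by (rule poly_mapping_eqI) (simp add: lookup_add distrib_left)
lemma scl_add_left: "scl (c + d) v = scl c v + scl d v"
  by (rule poly_mapping_eqI) (simp add: lookup_add distrib_right)
lemma scl_scl: "scl c (scl d v) = scl (c * d) v"
  by (rule poly_mapping_eqI) (simp add: mult.assoc)
lemma scl_zero [simp]: "scl c 0 = 0"
  by (rule poly_mapping_eqI) simp
lemma scl_zero_left [simp]: "scl 0 v = 0"
  by (rule poly_mapping_eqI) simp
lemma scl_one [simp]: "scl 1 v = v"
  by (rule poly_mapping_eqI) simp
lemma scl_minus: "scl c (- v) = - scl c v"
  by (rule poly_mapping_eqI) simp
lemma scl_diff: "scl c (v - w) = scl c v - scl c w"
  by (rule poly_mapping_eqI) (simp add: lookup_minus right_diff_distrib)
lemma scl_minus_left: "scl (- c) v = - scl c v"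
  by (rule poly_mapping_eqI) simp
lemma scl_diff_left: "scl (c - d) v = scl c v - scl d v"
  by (rule poly_mapping_eqI) (simp add: lookup_minus left_diff_distrib)
lemma scl_sum: "scl c (sum f A) = (\<Sum>a\<in>A. scl c (f a))"
  by (induction A rule: infinite_finite_induct) (auto simp: scl_add)
lemma scl_sum_left: "scl (sum f A) v = (\<Sum>a\<in>A. scl (f a) v)"
  by (induction A rule: infinite_finite_induct) (auto simp: scl_add_left)
lemma scl_single: "scl c (Poly_Mapping.single k d) = Poly_Mapping.single k (c * d)"
  by (rule poly_mapping_eqI) (simp add: lookup_single when_def)

definition lin :: "('n \<Rightarrow> ('m \<Rightarrow>\<^sub>0 'f::field)) \<Rightarrow> ('n \<Rightarrow>\<^sub>0 'f) \<Rightarrow> ('m \<Rightarrow>\<^sub>0 'f)" where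
  "lin f v = (\<Sum>b\<in>Poly_Mapping.keys v. scl (Poly_Mapping.lookup v b) (f b))"

lemma lin_expand: "finite X \<Longrightarrow> Poly_Mapping.keys v \<subseteq> X \<Longrightarrow> lin f v = (\<Sum>b\<in>X. scl (Poly_Mapping.lookup v b) (f b))"
  unfolding lin_def by (rule sum.mono_neutral_left) (auto simp: in_keys_iff)

lemma lin_add: "lin f (v + w) = lin f v + lin f w"
proof -
  let ?X = "Poly_Mapping.keys v \<union> Poly_Mapping.keys w"
  have "Poly_Mapping.keys (v + w) \<subseteq> ?X" by (rule keys_add)
  then show ?thesis
    by (simp add: lin_expand[where X="?X"] lookup_add scl_add_left sum.distrib)
qed

lemma lin_zero [simp]: "lin f 0 = 0" by (simp add: lin_def)

lemma lin_minus: "lin f (- v) = - lin f v"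
  by (metis add_eq_0_iff lin_add lin_zero neg_eq_iff_add_eq_0)

lemma lin_diff: "lin f (v - w) = lin f v - lin f w"
  by (metis diff_conv_add_uminus lin_add lin_minus)

lemma lin_sum: "lin f (sum g A) = (\<Sum>a\<in>A. lin f (g a))"
  by (induction A rule: infinite_finite_induct) (auto simp: lin_add)

lemma lin_scl: "lin f (scl c v) = scl c (lin f v)"
proof -
  have "Poly_Mapping.keys (scl c v) \<subseteq> Poly_Mapping.keys v" by (auto simp: in_keys_iff)
  then show ?thesis by (simp add: lin_expand[where X="Poly_Mapping.keys v"] scl_sum scl_scl)
qed

lemma lin_single: "lin f (Poly_Mapping.single b c) = scl c (f b)"
  by (simp add: lin_expand[where X="{b}"])

lemma lin_addf: "lin (\<lambda>b. f b + g b) v = lin f v + lin g v"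
  by (simp add: lin_def scl_add sum.distrib)

lemma lin_sclf: "lin (\<lambda>b. scl c (f b)) v = scl c (lin f v)"
  by (simp add: lin_def scl_sum scl_scl mult.commute)

lemma lin_cong: "(\<And>b. b \<in> Poly_Mapping.keys v \<Longrightarrow> f b = g b) \<Longrightarrow> lin f v = lin g v"
  by (simp add: lin_def)

lemma lin_id: "lin (\<lambda>b. Poly_Mapping.single b 1) v = v"
  by (simp add: lin_def scl_single flip: pm_decomp)

lemma lin_comp:
  assumes "\<And>v w. g (v + w) = g v + g w" "\<And>c v. g (scl c v) = scl c (g v)"
  shows "g (lin f v) = lin (\<lambda>b. g (f b)) v"
proof -
  have g0: "g 0 = 0" using assms(1)[of 0 0] by simp
  have gs: "g (sum h A) = (\<Sum>a\<in>A. g (h a))" for h and A :: "'x set"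
    by (induction A rule: infinite_finite_induct) (auto simp: g0 assms(1))
  show ?thesis by (simp add: lin_def gs assms(2))
qed



locale fmod =
  fixes alg :: "'r::idom \<Rightarrow> 'a::ring_1" and na :: "'a \<Rightarrow> 'n::ab_group_add \<Rightarrow> 'n" and B :: "'n set"
  assumes cen: "central_alg alg" and lm: "left_module na"
    and spanB: "\<And>x. \<exists>c. finite {b\<in>B. c b \<noteq> 0} \<and> x - (\<Sum>b\<in>{b\<in>B. c b \<noteq> 0}. na (alg (c b)) b) \<in> {0}"
    and indepB: "\<And>c. finite {b\<in>B. c b \<noteq> 0} \<Longrightarrow> (\<Sum>b\<in>{b\<in>B. c b \<noteq> 0}. na (alg (c b)) b) \<in> {0} \<Longrightarrow> (\<forall>b\<in>B. c b = 0)"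
begin

lemma alg_add: "alg (r + s) = alg r + alg s" and alg_mult: "alg (r * s) = alg r * alg s"
  and alg_one: "alg 1 = 1" and alg_comm: "alg r * a = a * alg r"
  using cen unfolding central_alg_def by blast+

lemma alg_zero [simp]: "alg 0 = 0" using alg_add[of 0 0] by simp
lemma alg_minus: "alg (- r) = - alg r" using alg_add[of r "- r"] by (simp add: add_eq_0_iff)
lemma alg_diff: "alg (r - s) = alg r - alg s" by (simp only: diff_conv_add_uminus alg_add alg_minus)

lemma na_add: "na a (x + y) = na a x + na a y" and na_add_left: "na (a + b) x = na a x + na b x"
  and na_mult: "na (a * b) x = na a (na b x)" and na_one: "na 1 x = x"
  using lm unfolding left_module_def by blast+

lemma na_zero [simp]: "na a 0 = 0" using na_add[of a 0 0] by simp
lemma na_zero_left [simp]: "na 0 x = 0" using na_add_left[of 0 0 x] by simp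
lemma na_minus: "na a (- x) = - na a x" using na_add[of a x "- x"] by (simp add: add_eq_0_iff)
lemma na_diff: "na a (x - y) = na a x - na a y" by (simp only: diff_conv_add_uminus na_add na_minus)
lemma na_minus_left: "na (- a) x = - na a x" using na_add_left[of a "- a" x] by (simp add: add_eq_0_iff)
lemma na_diff_left: "na (a - b) x = na a x - na b x" by (simp only: diff_conv_add_uminus na_add_left na_minus_left)
lemma na_sum: "na a (sum f A) = (\<Sum>i\<in>A. na a (f i))"
  by (induction A rule: infinite_finite_induct) (auto simp: na_add)
lemma na_alg_comm: "na (alg r) (na a x) = na a (na (alg r) x)"
  by (metis na_mult alg_comm)
lemma na_alg_mult: "na (alg r) (na (alg s) x) = na (alg (r * s)) x"
  by (simp add: na_mult alg_mult)

definition rep :: "('n \<Rightarrow> 'r) \<Rightarrow> 'n set \<Rightarrow> 'n" where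
  "rep c S = (\<Sum>b\<in>S. na (alg (c b)) b)"

definition supp :: "('n \<Rightarrow> 'r) \<Rightarrow> 'n set" where "supp c = {b\<in>B. c b \<noteq> 0}"

lemma rep_super: "finite S \<Longrightarrow> supp c \<subseteq> S \<Longrightarrow> S \<subseteq> B \<Longrightarrow> rep c (supp c) = rep c S"
  unfolding rep_def supp_def by (rule sum.mono_neutral_left) auto

lemma uniq:
  assumes "finite (supp c)" "finite (supp d)" "rep c (supp c) = rep d (supp d)" "b \<in> B"
  shows "c b = d b"
proof -
  define e where "e b = c b - d b" for b
  let ?S = "supp c \<union> supp d"
  have se: "supp e \<subseteq> ?S" by (auto simp: supp_def e_def)
  have fe: "finite (supp e)" using se assms(1,2) finite_subset by blast
  have SB: "?S \<subseteq> B" by (auto simp: supp_def)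
  have "rep e (supp e) = rep e ?S" using se SB assms(1,2) by (intro rep_super) auto
  also have "\<dots> = rep c ?S - rep d ?S"
    by (simp add: rep_def e_def alg_diff na_diff_left sum_subtractf)
  also have "\<dots> = 0"
  proof -
    have fS: "finite ?S" using assms(1,2) by simp
    have e1: "rep c (supp c) = rep c ?S" by (rule rep_super) (use fS SB in auto)
    have e2: "rep d (supp d) = rep d ?S" by (rule rep_super) (use fS SB in auto)
    show ?thesis using e1 e2 assms(3) by simp
  qed
  finally have z: "rep e (supp e) = 0" .
  have "\<forall>b\<in>B. e b = 0"
    by (rule indepB) (use fe z in \<open>simp_all only: rep_def supp_def singleton_iff\<close>)
  then show ?thesis using assms(4) by (simp add: e_def)
qed

definition crd :: "'n \<Rightarrow> 'n \<Rightarrow> 'r" where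
  "crd x = (SOME c. finite (supp c) \<and> x = rep c (supp c))"

lemma crd_spec: "finite (supp (crd x)) \<and> x = rep (crd x) (supp (crd x))"
proof -
  obtain c where c1: "finite {b\<in>B. c b \<noteq> 0}" and c2: "x - (\<Sum>b\<in>{b\<in>B. c b \<noteq> 0}. na (alg (c b)) b) \<in> {0}"
    using spanB[of x] by blast
  have "finite (supp c)" using c1 unfolding supp_def .
  moreover have "x = rep c (supp c)" using c2 unfolding supp_def rep_def singleton_iff right_minus_eq .
  ultimately have "\<exists>c. finite (supp c) \<and> x = rep c (supp c)" by blast
  then show ?thesis unfolding crd_def by (rule someI_ex)
qed

lemma crd_fin: "finite (supp (crd x))" and crd_rep: "rep (crd x) (supp (crd x)) = x"
  using crd_spec[of x] by auto

lemma crd_uniq: "finite (supp c) \<Longrightarrow> rep c (supp c) = x \<Longrightarrow> b \<in> B \<Longrightarrow> crd x b = c b"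
  using uniq[of "crd x" c b] crd_fin crd_rep by auto

lemma crd_add: "b \<in> B \<Longrightarrow> crd (x + y) b = crd x b + crd y b"
proof -
  assume b: "b \<in> B"
  define c where "c b = crd x b + crd y b" for b
  let ?S = "supp (crd x) \<union> supp (crd y)"
  have sc: "supp c \<subseteq> ?S" by (auto simp: supp_def c_def)
  have SB: "?S \<subseteq> B" by (auto simp: supp_def)
  have fS: "finite ?S" using crd_fin by auto
  have "rep c (supp c) = rep c ?S" using rep_super[OF fS sc SB] .
  also have "\<dots> = rep (crd x) ?S + rep (crd y) ?S"
    by (simp add: rep_def c_def alg_add na_add_left sum.distrib)
  also have "\<dots> = x + y"
    using rep_super[OF fS _ SB, of "crd x"] rep_super[OF fS _ SB, of "crd y"] crd_rep by auto
  finally show ?thesis using crd_uniq[of c "x + y" b] b finite_subset[OF sc fS] by (simp add: c_def)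
qed

lemma crd_scal: "b \<in> B \<Longrightarrow> crd (na (alg r) x) b = r * crd x b"
proof -
  assume b: "b \<in> B"
  define c where "c b = r * crd x b" for b
  have sc: "supp c \<subseteq> supp (crd x)" by (auto simp: supp_def c_def)
  have SB: "supp (crd x) \<subseteq> B" by (auto simp: supp_def)
  have "rep c (supp c) = rep c (supp (crd x))" using rep_super[OF crd_fin sc SB] .
  also have "\<dots> = na (alg r) x"
    by (subst (2) crd_rep[symmetric]) (simp add: rep_def c_def na_sum na_alg_mult)
  finally show ?thesis using crd_uniq[of c _ b] b finite_subset[OF sc crd_fin] by (simp add: c_def)
qed

lemma crd_basis: "b0 \<in> B \<Longrightarrow> b \<in> B \<Longrightarrow> crd b0 b = (if b = b0 then 1 else 0)"
proof -
  assume b0: "b0 \<in> B" and b: "b \<in> B"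
  define c where "c b = (if b = b0 then 1 else (0::'r))" for b
  have sc: "supp c = {b0}" using b0 by (auto simp: supp_def c_def)
  have "rep c (supp c) = b0" by (simp add: sc rep_def c_def alg_one na_one)
  then show ?thesis using crd_uniq[of c b0 b] b sc by (simp add: c_def)
qed

lemma crd_inj: "(\<And>b. b \<in> B \<Longrightarrow> crd x b = crd y b) \<Longrightarrow> x = y"
proof -
  assume h: "\<And>b. b \<in> B \<Longrightarrow> crd x b = crd y b"
  have "supp (crd x) = supp (crd y)" using h by (auto simp: supp_def)
  moreover have "rep (crd x) (supp (crd x)) = rep (crd y) (supp (crd x))"
    unfolding rep_def by (rule sum.cong) (auto simp: supp_def h)
  ultimately show ?thesis using crd_rep[of x] crd_rep[of y] by metis
qed

definition iota :: "'n \<Rightarrow> ('n \<Rightarrow>\<^sub>0 'r fract)" where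
  "iota x = (\<Sum>b\<in>supp (crd x). Poly_Mapping.single b (Fract (crd x b) 1))"

lemma lookup_iota: "Poly_Mapping.lookup (iota x) b = (if b \<in> B then Fract (crd x b) 1 else 0)"
proof -
  have "Poly_Mapping.lookup (iota x) b = (\<Sum>b'\<in>supp (crd x). (Fract (crd x b') 1 when b' = b))"
    by (simp add: iota_def lookup_sum lookup_single)
  also have "\<dots> = (if b \<in> B then Fract (crd x b) 1 else 0)"
    using crd_fin[of x] by (auto simp: supp_def when_def Zero_fract_def)
  finally show ?thesis .
qed

lemma Fract1_eq0: "Fract (a::'r) 1 = 0 \<longleftrightarrow> a = 0"
  by (simp add: Zero_fract_def eq_fract)

lemma keys_iota: "Poly_Mapping.keys (iota x) = supp (crd x)"
  by (auto simp: in_keys_iff lookup_iota supp_def Fract1_eq0 split: if_splits)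

lemma iota_add: "iota (x + y) = iota x + iota y"
  by (rule poly_mapping_eqI) (simp add: lookup_add lookup_iota crd_add)

lemma iota_zero [simp]: "iota 0 = 0"
  using iota_add[of 0 0] by simp

lemma iota_minus: "iota (- x) = - iota x"
  by (metis add_eq_0_iff iota_add iota_zero neg_eq_iff_add_eq_0)

lemma iota_diff: "iota (x - y) = iota x - iota y"
  by (metis diff_conv_add_uminus iota_add iota_minus)

lemma iota_sum: "iota (sum f A) = (\<Sum>a\<in>A. iota (f a))"
  by (induction A rule: infinite_finite_induct) (auto simp: iota_add)

lemma iota_scal: "iota (na (alg r) x) = scl (Fract r 1) (iota x)"
  by (rule poly_mapping_eqI) (simp add: lookup_iota crd_scal)

lemma iota_inj: "iota x = iota y \<Longrightarrow> x = y"
proof -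
  assume "iota x = iota y"
  then have "\<And>b. b \<in> B \<Longrightarrow> Fract (crd x b) 1 = Fract (crd y b) 1"
    by (metis lookup_iota)
  then show ?thesis by (intro crd_inj) (simp add: eq_fract)
qed

lemma iota_basis: "b0 \<in> B \<Longrightarrow> iota b0 = Poly_Mapping.single b0 1"
  by (rule poly_mapping_eqI) (auto simp: lookup_iota crd_basis lookup_single when_def One_fract_def Zero_fract_def)

lemma iota_lin: "x = (\<Sum>b\<in>Poly_Mapping.keys (iota x). na (alg (crd x b)) b)"
  using crd_rep[of x] by (simp add: keys_iota rep_def)

definition actA :: "'a \<Rightarrow> ('n \<Rightarrow>\<^sub>0 'r fract) \<Rightarrow> ('n \<Rightarrow>\<^sub>0 'r fract)" where
  "actA a v = lin (\<lambda>b. if b \<in> B then iota (na a b) else 0) v"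

lemma actA_add: "actA a (v + w) = actA a v + actA a w" by (simp add: actA_def lin_add)
lemma actA_scl: "actA a (scl c v) = scl c (actA a v)" by (simp add: actA_def lin_scl)
lemma actA_zero [simp]: "actA a 0 = 0" by (simp add: actA_def)
lemma actA_minus: "actA a (- v) = - actA a v" by (simp add: actA_def lin_minus)
lemma actA_diff: "actA a (v - w) = actA a v - actA a w" by (simp add: actA_def lin_diff)
lemma actA_sum: "actA a (sum f A) = (\<Sum>i\<in>A. actA a (f i))" by (simp add: actA_def lin_sum)

lemma actA_iota: "actA a (iota x) = iota (na a x)"
proof -
  have kB: "Poly_Mapping.keys (iota x) \<subseteq> B" by (auto simp: keys_iota supp_def)
  have "actA a (iota x) = (\<Sum>b\<in>Poly_Mapping.keys (iota x). scl (Fract (crd x b) 1) (iota (na a b)))"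
    unfolding actA_def lin_def using kB by (intro sum.cong) (auto simp: lookup_iota)
  also have "\<dots> = (\<Sum>b\<in>Poly_Mapping.keys (iota x). iota (na a (na (alg (crd x b)) b)))"
    by (simp add: iota_scal flip: na_alg_comm)
  also have "\<dots> = iota (na a x)"
    by (subst (2) iota_lin) (simp add: iota_sum na_sum)
  finally show ?thesis .
qed

lemma actA_add_left: "actA (a + a') v = actA a v + actA a' v"
  unfolding actA_def by (subst lin_addf[symmetric]) (rule lin_cong, simp add: na_add_left iota_add)

lemma actA_mult: "actA a (actA a' v) = actA (a * a') v"
proof -
  have "actA a (actA a' v) = lin (\<lambda>b. actA a (if b \<in> B then iota (na a' b) else 0)) v"
    unfolding actA_def[of a'] by (rule lin_comp) (simp_all add: actA_add actA_scl)
  also have "\<dots> = actA (a * a') v"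
    unfolding actA_def[of "a * a'"] by (rule lin_cong) (simp add: actA_iota na_mult)
  finally show ?thesis .
qed

lemma actA_alg: "actA (a * alg r) v = scl (Fract r 1) (actA a v)"
proof -
  have "actA (a * alg r) v = lin (\<lambda>b. scl (Fract r 1) (if b \<in> B then iota (na a b) else 0)) v"
    unfolding actA_def by (rule lin_cong) (simp add: iota_scal na_mult flip: na_alg_comm)
  then show ?thesis by (simp add: lin_sclf actA_def)
qed

end


context fmod begin

definition actS :: "(('a \<times> 'r fract) \<Rightarrow>\<^sub>0 int) \<Rightarrow> ('n \<Rightarrow>\<^sub>0 'r fract) \<Rightarrow> ('n \<Rightarrow>\<^sub>0 'r fract)" where
  "actS x v = (\<Sum>k\<in>Poly_Mapping.keys x. scl (of_int (Poly_Mapping.lookup x k) * snd k) (actA (fst k) v))"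

lemma actS_expand: "finite X \<Longrightarrow> Poly_Mapping.keys x \<subseteq> X \<Longrightarrow>
   actS x v = (\<Sum>k\<in>X. scl (of_int (Poly_Mapping.lookup x k) * snd k) (actA (fst k) v))"
  unfolding actS_def by (rule sum.mono_neutral_left) (auto simp: in_keys_iff)

lemma actS_add_x: "actS (x + y) v = actS x v + actS y v"
proof -
  let ?X = "Poly_Mapping.keys x \<union> Poly_Mapping.keys y"
  have "Poly_Mapping.keys (x + y) \<subseteq> ?X" by (rule keys_add)
  then show ?thesis
    by (simp add: actS_expand[where X="?X"] lookup_add distrib_right scl_add_left sum.distrib)
qed

lemma actS_zero_x [simp]: "actS 0 v = 0" by (simp add: actS_def)
lemma actS_minus_x: "actS (- x) v = - actS x v"
  by (metis add_eq_0_iff actS_add_x actS_zero_x neg_eq_iff_add_eq_0)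
lemma actS_diff_x: "actS (x - y) v = actS x v - actS y v"
  by (metis diff_conv_add_uminus actS_add_x actS_minus_x)
lemma actS_sum_x: "actS (sum f A) v = (\<Sum>a\<in>A. actS (f a) v)"
  by (induction A rule: infinite_finite_induct) (auto simp: actS_add_x)

lemma actS_single: "actS (Poly_Mapping.single k c) v = scl (of_int c * snd k) (actA (fst k) v)"
  by (simp add: actS_expand[where X="{k}"])

lemma actS_add_v: "actS x (v + w) = actS x v + actS x w"
  by (simp add: actS_def actA_add scl_add sum.distrib)
lemma actS_zero_v [simp]: "actS x 0 = 0" by (simp add: actS_def)
lemma actS_minus_v: "actS x (- v) = - actS x v"
  by (metis add_eq_0_iff actS_add_v actS_zero_v neg_eq_iff_add_eq_0)
lemma actS_diff_v: "actS x (v - w) = actS x v - actS x w"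
  by (metis diff_conv_add_uminus actS_add_v actS_minus_v)
lemma actS_sum_v: "actS x (sum f A) = (\<Sum>a\<in>A. actS x (f a))"
  by (induction A rule: infinite_finite_induct) (auto simp: actS_add_v)
lemma actS_scl_v: "actS x (scl c v) = scl c (actS x v)"
  by (simp add: actS_def actA_scl scl_scl scl_sum mult.commute)

lemma actS_single_single:
  "actS (Poly_Mapping.single k c) (actS (Poly_Mapping.single l d) v) = actS (tmult (Poly_Mapping.single k c) (Poly_Mapping.single l d)) v"
  by (simp add: tmult_single actS_single actA_scl scl_scl actA_mult ac_simps)

lemma actS_tmult: "actS (tmult x y) v = actS x (actS y v)"
proof -
  have "actS (tmult x y) v = actS (tmult (\<Sum>k\<in>Poly_Mapping.keys x. Poly_Mapping.single k (Poly_Mapping.lookup x k))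
        (\<Sum>l\<in>Poly_Mapping.keys y. Poly_Mapping.single l (Poly_Mapping.lookup y l))) v"
    by (simp flip: pm_decomp)
  also have "\<dots> = actS (\<Sum>k\<in>Poly_Mapping.keys x. Poly_Mapping.single k (Poly_Mapping.lookup x k))
        (actS (\<Sum>l\<in>Poly_Mapping.keys y. Poly_Mapping.single l (Poly_Mapping.lookup y l)) v)"
    by (simp only: tmult_sum_left tmult_sum_right actS_sum_x actS_sum_v actS_single_single)
  also have "\<dots> = actS x (actS y v)" by (simp flip: pm_decomp)
  finally show ?thesis .
qed

lemma actS_K: "x \<in> KK alg \<Longrightarrow> actS x v = 0"
proof (induction rule: tens_rel.induct)
  case (rel_add_l n p p')
  then show ?case by (simp add: actS_diff_x actS_single actA_add_left scl_add)
next
  case (rel_add_r n n' p)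
  then show ?case by (simp add: actS_diff_x actS_single distrib_left scl_add_left)
next
  case (rel_bal n p b)
  then show ?case by (simp add: actS_diff_x actS_single actA_alg scl_scl ac_simps)
next
  case rel_zero then show ?case by simp
next
  case (rel_plus x y) then show ?case by (simp add: actS_add_x)
next
  case (rel_neg x) then show ?case by (simp add: actS_minus_x)
qed

lemma actS_A: "actS (Poly_Mapping.single (a, 1) 1) (iota x) = iota (na a x)"
  by (simp add: actS_single actA_iota)

lemma actS_one: "actS one1 (iota x) = iota x"
  using actS_A[of 1 x] by (simp add: na_one)

end


inductive_set span_A :: "('a \<Rightarrow> 'n::ab_group_add \<Rightarrow> 'n) \<Rightarrow> 'n set \<Rightarrow> 'n set" for na T where
  sp_gen: "t \<in> T \<Longrightarrow> t \<in> span_A na T"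
| sp_zero: "0 \<in> span_A na T"
| sp_add: "x \<in> span_A na T \<Longrightarrow> y \<in> span_A na T \<Longrightarrow> x + y \<in> span_A na T"
| sp_act: "x \<in> span_A na T \<Longrightarrow> na a x \<in> span_A na T"

context fmod begin

definition DD :: "'n set \<Rightarrow> ('n \<Rightarrow>\<^sub>0 'r fract) set" where
  "DD N1 = {v. \<exists>r. r \<noteq> 0 \<and> (\<exists>m\<in>N1. scl (Fract r 1) v = iota m)}"

context
  fixes N1 assumes sub: "left_submodule na N1"
begin

lemma N1_zero: "0 \<in> N1" and N1_add: "x \<in> N1 \<Longrightarrow> y \<in> N1 \<Longrightarrow> x + y \<in> N1"
  and N1_neg: "x \<in> N1 \<Longrightarrow> - x \<in> N1" and N1_act: "x \<in> N1 \<Longrightarrow> na a x \<in> N1"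
  using sub unfolding left_submodule_def by blast+

lemma DD_zero: "0 \<in> DD N1"
  unfolding DD_def using N1_zero iota_zero by (intro CollectI exI[of _ 1]) (metis scl_zero zero_neq_one)

lemma DD_iota: "m \<in> N1 \<Longrightarrow> iota m \<in> DD N1"
  unfolding DD_def by (intro CollectI exI[of _ 1]) (auto simp: One_fract_def[symmetric])

lemma DD_add: "v \<in> DD N1 \<Longrightarrow> w \<in> DD N1 \<Longrightarrow> v + w \<in> DD N1"
proof -
  assume "v \<in> DD N1" "w \<in> DD N1"
  then obtain r s m n where r: "r \<noteq> 0" "m \<in> N1" "scl (Fract r 1) v = iota m"
    and s: "s \<noteq> 0" "n \<in> N1" "scl (Fract s 1) w = iota n" unfolding DD_def by blast
  have "scl (Fract (s * r) 1) (v + w) = iota (na (alg s) m + na (alg r) n)"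
  proof -
    have "scl (Fract (s * r) 1) (v + w) = scl (Fract s 1) (scl (Fract r 1) v) + scl (Fract r 1) (scl (Fract s 1) w)"
      by (simp add: scl_add scl_scl mult.commute)
    also have "\<dots> = iota (na (alg s) m + na (alg r) n)" using r s by (simp add: iota_add iota_scal)
    finally show ?thesis .
  qed
  moreover have "na (alg s) m + na (alg r) n \<in> N1" using r s N1_add N1_act by blast
  moreover have "s * r \<noteq> 0" using r s by simp
  ultimately show ?thesis unfolding DD_def by blast
qed

lemma DD_neg: "v \<in> DD N1 \<Longrightarrow> - v \<in> DD N1"
proof -
  assume "v \<in> DD N1"
  then obtain r m where r: "r \<noteq> 0" "m \<in> N1" "scl (Fract r 1) v = iota m" unfolding DD_def by blast
  then have "scl (Fract r 1) (- v) = iota (- m)" by (simp add: scl_minus iota_minus)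
  then show ?thesis unfolding DD_def using r N1_neg by blast
qed

lemma DD_term: "v \<in> DD N1 \<Longrightarrow> scl f (actA a v) \<in> DD N1"
proof -
  assume "v \<in> DD N1"
  then obtain r m where r: "r \<noteq> 0" "m \<in> N1" "scl (Fract r 1) v = iota m" unfolding DD_def by blast
  obtain p q where f: "f = Fract p q" "q \<noteq> 0" by (cases f) auto
  have "scl (Fract (q * r) 1) (scl f (actA a v)) = scl (Fract p 1) (actA a (scl (Fract r 1) v))"
  proof -
    have e: "Fract (q * r * p) q = Fract (p * r) 1" using f by (simp add: eq_fract ac_simps)
    show ?thesis using f by (simp add: scl_scl actA_scl e)
  qed
  also have "\<dots> = iota (na (alg p) (na a m))" using r by (simp add: actA_iota iota_scal)
  finally show ?thesis unfolding DD_def using r f N1_act by (intro CollectI exI[of _ "q * r"]) auto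
qed

lemma DD_sum: "(\<And>i. i \<in> A \<Longrightarrow> f i \<in> DD N1) \<Longrightarrow> sum f A \<in> DD N1"
  by (induction A rule: infinite_finite_induct) (auto simp: DD_zero DD_add)

lemma DD_actS: "v \<in> DD N1 \<Longrightarrow> actS x v \<in> DD N1"
  unfolding actS_def by (rule DD_sum) (rule DD_term)

lemma DD_common: "finite X \<Longrightarrow> X \<subseteq> DD N1 \<Longrightarrow> \<exists>r. r \<noteq> 0 \<and> (\<forall>v\<in>X. \<exists>m\<in>N1. scl (Fract r 1) v = iota m)"
proof (induction X rule: finite_induct)
  case empty then show ?case by (intro exI[of _ 1]) auto
next
  case (insert v X)
  then obtain r where r: "r \<noteq> 0" "\<forall>w\<in>X. \<exists>m\<in>N1. scl (Fract r 1) w = iota m" by auto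
  obtain s m where s: "s \<noteq> 0" "m \<in> N1" "scl (Fract s 1) v = iota m" using insert(4) unfolding DD_def by blast
  have "\<forall>w\<in>insert v X. \<exists>m\<in>N1. scl (Fract (s * r) 1) w = iota m"
  proof
    fix w assume "w \<in> insert v X"
    then show "\<exists>m\<in>N1. scl (Fract (s * r) 1) w = iota m"
    proof
      assume "w = v"
      then have "scl (Fract (s * r) 1) w = scl (Fract r 1) (scl (Fract s 1) v)"
        by (simp add: scl_scl mult.commute[of s r])
      then have "scl (Fract (s * r) 1) w = iota (na (alg r) m)"
        using s by (simp add: iota_scal)
      then show ?thesis using N1_act s by blast
    next
      assume "w \<in> X"
      then obtain m' where "m' \<in> N1" "scl (Fract r 1) w = iota m'" using r by blast
      then have "scl (Fract (s * r) 1) w = iota (na (alg s) m')"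
        by (metis iota_scal scl_scl mult_fract mult_1)
      then show ?thesis using N1_act \<open>m' \<in> N1\<close> by blast
    qed
  qed
  then show ?case using r s by (intro exI[of _ "s * r"]) auto
qed

end
end


context fmod begin

definition gmap :: "'n list \<Rightarrow> (nat \<Rightarrow> ('a \<times> 'r fract) \<Rightarrow>\<^sub>0 int) \<Rightarrow> ('n \<Rightarrow>\<^sub>0 'r fract)" where
  "gmap ts v = (\<Sum>i<length ts. actS (v i) (iota (ts ! i)))"

lemma gmap_add: "gmap ts (v + w) = gmap ts v + gmap ts w"
  by (simp add: gmap_def actS_add_x sum.distrib)
lemma gmap_neg: "gmap ts (- v) = - gmap ts v"
  by (simp add: gmap_def actS_minus_x sum_negf)
lemma gmap_diff: "gmap ts (v - w) = gmap ts v - gmap ts w"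
  by (simp add: gmap_def actS_diff_x sum_subtractf)
lemma gmap_zero: "gmap ts 0 = 0"
  by (simp add: gmap_def)
lemma gmap_smul: "gmap ts (smul x v) = actS x (gmap ts v)"
  by (simp add: gmap_def smul_apply actS_tmult actS_sum_v)
lemma gmap_K: "v \<in> Kv alg \<Longrightarrow> gmap ts v = 0"
  by (simp add: gmap_def Kv_def actS_K)

lemma exists_phi:
  assumes ss: "base_change_semisimple alg" and sub: "left_submodule na N1"
  shows "\<exists>r \<phi>. r \<noteq> 0 \<and> (\<forall>n\<in>span_A na (set ts). \<phi> n \<in> N1)
     \<and> (\<forall>n\<in>span_A na (set ts). \<forall>n'\<in>span_A na (set ts). \<phi> (n + n') = \<phi> n + \<phi> n')
     \<and> (\<forall>a. \<forall>n\<in>span_A na (set ts). \<phi> (na a n) = na a (\<phi> n))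
     \<and> (\<forall>n\<in>N1 \<inter> span_A na (set ts). \<phi> n = na (alg r) n)"
proof -
  define k where "k = length ts"
  define g where "g = gmap ts"
  define W where "W = {v \<in> vec k. g v \<in> DD N1}"
  have vadd: "\<And>v w. v \<in> vec j \<Longrightarrow> w \<in> vec j \<Longrightarrow> v + w \<in> vec j" for j by (auto simp: vec_def)
  have vneg: "\<And>v. v \<in> vec j \<Longrightarrow> - v \<in> vec j" for j by (auto simp: vec_def)
  have vsm: "\<And>v x. v \<in> vec j \<Longrightarrow> smul x v \<in> vec j" for j by (auto simp: vec_def smul_apply)
  have "\<exists>q. (\<forall>v\<in>vec k. q v \<in> W) \<and> (\<forall>w\<in>W. w - q w \<in> Kv alg) \<and>
        (\<forall>v\<in>vec k. \<forall>w\<in>vec k. q (v + w) = q v + q w) \<and> (\<forall>x. \<forall>v\<in>vec k. q (smul x v) = smul x (q v))"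
  proof (rule split_vec[OF ss cen])
    show "W \<subseteq> vec k" unfolding W_def by blast
    show "vec k \<inter> Kv alg \<subseteq> W" unfolding W_def g_def using gmap_K DD_zero[OF sub] by auto
    show "\<forall>v\<in>W. \<forall>w\<in>W. v + w \<in> W" unfolding W_def g_def using vadd gmap_add DD_add[OF sub] by auto
    show "\<forall>v\<in>W. - v \<in> W" unfolding W_def g_def using vneg gmap_neg DD_neg[OF sub] by auto
    show "\<forall>x. \<forall>v\<in>W. smul x v \<in> W" unfolding W_def g_def using vsm gmap_smul DD_actS[OF sub] by auto
  qed
  then obtain q where qW: "\<And>v. v\<in>vec k \<Longrightarrow> q v \<in> W" and qK: "\<And>w. w\<in>W \<Longrightarrow> w - q w \<in> Kv alg"
    and qadd: "\<And>v w. v\<in>vec k \<Longrightarrow> w\<in>vec k \<Longrightarrow> q (v + w) = q v + q w"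
    and qsm: "\<And>x v. v\<in>vec k \<Longrightarrow> q (smul x v) = smul x (q v)" by blast
  have gq: "g (q w) = g w" if "w \<in> W" for w
  proof -
    have "g (w - q w) = 0" using qK[OF that] g_def gmap_K by blast
    then show ?thesis by (simp add: g_def gmap_diff)
  qed
  define pi where "pi m = g (q (SOME v. v \<in> vec k \<and> g v = m))" for m
  have pi_wd: "pi (g v) = g (q v)" if v: "v \<in> vec k" for v
  proof -
    define v' where "v' = (SOME v'. v' \<in> vec k \<and> g v' = g v)"
    have v': "v' \<in> vec k" "g v' = g v" unfolding v'_def by (rule someI2[of _ v], use v in auto)+
    have d: "v' - v \<in> vec k" using v v' by (auto simp: vec_def)
    have "g (v' - v) = 0" using v' by (simp add: g_def gmap_diff)
    then have dW: "v' - v \<in> W" unfolding W_def using d DD_zero[OF sub] by simp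
    have "q v' = q (v' - v) + q v" using qadd[OF d v] by simp
    then have "g (q v') = g (q (v' - v)) + g (q v)" by (simp add: g_def gmap_add)
    also have "g (q (v' - v)) = 0" using gq[OF dW] \<open>g (v' - v) = 0\<close> by simp
    finally show ?thesis unfolding pi_def v'_def by simp
  qed
  have pi_D: "pi (g v) \<in> DD N1" if "v \<in> vec k" for v
    using pi_wd[OF that] qW[OF that] W_def by auto
  have pi_fix: "pi (g v) = g v" if "v \<in> vec k" "g v \<in> DD N1" for v
    using pi_wd[OF that(1)] gq[of v] that W_def by auto
  have pi_add: "pi (g v + g w) = pi (g v) + pi (g w)" if "v \<in> vec k" "w \<in> vec k" for v w
  proof -
    have "pi (g v + g w) = pi (g (v + w))" by (simp add: g_def gmap_add)
    also have "\<dots> = g (q (v + w))" by (rule pi_wd) (rule vadd[OF that])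
    also have "\<dots> = g (q v) + g (q w)" using qadd[OF that] by (simp add: g_def gmap_add)
    also have "\<dots> = pi (g v) + pi (g w)" using pi_wd that by simp
    finally show ?thesis .
  qed
  have pi_act: "pi (actS x (g v)) = actS x (pi (g v))" if "v \<in> vec k" for x v
  proof -
    have "pi (actS x (g v)) = pi (g (smul x v))" by (simp add: g_def gmap_smul)
    also have "\<dots> = g (q (smul x v))" by (rule pi_wd) (rule vsm[OF that])
    also have "\<dots> = actS x (g (q v))" using qsm[OF that] by (simp add: g_def gmap_smul)
    also have "\<dots> = actS x (pi (g v))" using pi_wd that by simp
    finally show ?thesis .
  qed
  define e where "e i = (\<lambda>j::nat. if j = i then one1 else (0 :: ('a \<times> 'r fract) \<Rightarrow>\<^sub>0 int))" for i :: nat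
  have ge: "g (e i) = iota (ts ! i)" if "i < k" for i :: nat
  proof -
    have "g (e i) = (\<Sum>j<length ts. if j = i then actS one1 (iota (ts ! j)) else 0)"
      unfolding g_def gmap_def e_def by (intro sum.cong) auto
    also have "\<dots> = iota (ts ! i)" using that k_def by (simp add: actS_one)
    finally show ?thesis .
  qed
  have ev: "e i \<in> vec k" if "i < k" for i using that by (auto simp: vec_def e_def)
  have inM: "\<exists>v\<in>vec k. g v = iota n" if "n \<in> span_A na (set ts)" for n
    using that
  proof (induction rule: span_A.induct)
    case (sp_gen t)
    then obtain i where "i < k" "t = ts ! i" by (auto simp: k_def in_set_conv_nth)
    then show ?case using ge ev by metis
  next
    case sp_zero
    have "(0 :: nat \<Rightarrow> ('a \<times> 'r fract) \<Rightarrow>\<^sub>0 int) \<in> vec k" by (simp add: vec_def)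
    then show ?case by (metis g_def gmap_zero iota_zero)
  next
    case (sp_add x y)
    then obtain v w where "v \<in> vec k" "g v = iota x" "w \<in> vec k" "g w = iota y" by blast
    then show ?case using vadd by (metis g_def gmap_add iota_add)
  next
    case (sp_act x a)
    then obtain v where "v \<in> vec k" "g v = iota x" by blast
    then show ?case using vsm by (metis g_def gmap_smul actS_A)
  qed
  have "finite ((\<lambda>t. pi (iota t)) ` set ts)" by simp
  moreover have "(\<lambda>t. pi (iota t)) ` set ts \<subseteq> DD N1"
  proof
    fix w assume "w \<in> (\<lambda>t. pi (iota t)) ` set ts"
    then obtain t where t: "t \<in> set ts" "w = pi (iota t)" by blast
    then obtain v where "v \<in> vec k" "g v = iota t" using inM span_A.sp_gen by blast
    then show "w \<in> DD N1" using pi_D t by metis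
  qed
  ultimately obtain r where r: "r \<noteq> 0" "\<forall>w\<in>(\<lambda>t. pi (iota t)) ` set ts. \<exists>m\<in>N1. scl (Fract r 1) w = iota m"
    using DD_common[OF sub] by blast
  have main: "\<exists>m\<in>N1. scl (Fract r 1) (pi (iota n)) = iota m" if "n \<in> span_A na (set ts)" for n
    using that
  proof (induction rule: span_A.induct)
    case (sp_gen t) then show ?case using r by blast
  next
    case sp_zero
    have z: "(0 :: nat \<Rightarrow> ('a \<times> 'r fract) \<Rightarrow>\<^sub>0 int) \<in> vec k" by (simp add: vec_def)
    have "q 0 = 0" using qadd[OF z z] by simp
    then have "pi (iota 0) = 0" using pi_wd[OF z] by (simp add: g_def gmap_zero)
    then show ?case using N1_zero[OF sub] by (metis iota_zero scl_zero)
  next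
    case (sp_add x y)
    obtain v w where vw: "v \<in> vec k" "g v = iota x" "w \<in> vec k" "g w = iota y"
      using inM sp_add.hyps by blast
    obtain m m' where "m \<in> N1" "scl (Fract r 1) (pi (iota x)) = iota m"
      "m' \<in> N1" "scl (Fract r 1) (pi (iota y)) = iota m'" using sp_add.IH by blast
    then have "scl (Fract r 1) (pi (iota (x + y))) = iota (m + m')"
      using pi_add[OF vw(1,3)] vw by (simp add: iota_add scl_add)
    then show ?case using N1_add[OF sub] \<open>m \<in> N1\<close> \<open>m' \<in> N1\<close> by blast
  next
    case (sp_act x a)
    obtain v where v: "v \<in> vec k" "g v = iota x" using inM sp_act.hyps by blast
    obtain m where m: "m \<in> N1" "scl (Fract r 1) (pi (iota x)) = iota m" using sp_act.IH by blast
    have "iota (na a x) = actS (Poly_Mapping.single (a, 1) 1) (g v)" using v by (simp add: actS_A)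
    then have "scl (Fract r 1) (pi (iota (na a x))) = actS (Poly_Mapping.single (a, 1) 1) (iota m)"
      using pi_act[OF v(1)] v m by (simp add: actS_scl_v[symmetric])
    then have "scl (Fract r 1) (pi (iota (na a x))) = iota (na a m)" by (simp add: actS_A)
    then show ?case using N1_act[OF sub] m by blast
  qed
  define phi where "phi n = (SOME m. m \<in> N1 \<and> scl (Fract r 1) (pi (iota n)) = iota m)" for n
  have phi: "phi n \<in> N1" "iota (phi n) = scl (Fract r 1) (pi (iota n))" if "n \<in> span_A na (set ts)" for n
    using someI_ex[OF main[OF that, unfolded Bex_def]] unfolding phi_def by auto
  have P1: "\<forall>n\<in>span_A na (set ts). \<forall>n'\<in>span_A na (set ts). phi (n + n') = phi n + phi n'"
  proof (intro ballI)
    fix n n' assume n: "n \<in> span_A na (set ts)" and n': "n' \<in> span_A na (set ts)"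
    obtain v w where vw: "v \<in> vec k" "g v = iota n" "w \<in> vec k" "g w = iota n'"
      using inM n n' by blast
    have "iota (phi (n + n')) = scl (Fract r 1) (pi (g v + g w))"
      using phi(2)[OF span_A.sp_add[OF n n']] vw by (simp add: iota_add)
    also have "\<dots> = iota (phi n + phi n')"
      using pi_add[OF vw(1,3)] phi(2)[OF n] phi(2)[OF n'] vw by (simp add: scl_add iota_add)
    finally show "phi (n + n') = phi n + phi n'" by (rule iota_inj)
  qed
  have P2: "\<forall>a. \<forall>n\<in>span_A na (set ts). phi (na a n) = na a (phi n)"
  proof (intro allI ballI)
    fix a n assume n: "n \<in> span_A na (set ts)"
    obtain v where v: "v \<in> vec k" "g v = iota n" using inM n by blast
    have "iota (phi (na a n)) = scl (Fract r 1) (pi (actS (Poly_Mapping.single (a, 1) 1) (g v)))"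
      using phi(2)[OF span_A.sp_act[OF n]] v by (simp add: actS_A)
    also have "\<dots> = actS (Poly_Mapping.single (a, 1) 1) (iota (phi n))"
      using pi_act[OF v(1)] phi(2)[OF n] v by (simp add: actS_scl_v)
    also have "\<dots> = iota (na a (phi n))" by (simp add: actS_A)
    finally show "phi (na a n) = na a (phi n)" by (rule iota_inj)
  qed
  have P3: "\<forall>n\<in>N1 \<inter> span_A na (set ts). phi n = na (alg r) n"
  proof
    fix n assume n: "n \<in> N1 \<inter> span_A na (set ts)"
    obtain v where v: "v \<in> vec k" "g v = iota n" using inM n by blast
    have "pi (iota n) = iota n" using pi_fix[OF v(1)] v DD_iota[OF sub] n by auto
    then have "iota (phi n) = iota (na (alg r) n)" using phi(2) n by (simp add: iota_scal)
    then show "phi n = na (alg r) n" by (rule iota_inj)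
  qed
  show ?thesis using r(1) phi(1) P1 P2 P3 by blast
qed

end


definition push :: "('k \<Rightarrow> 'l) \<Rightarrow> ('k \<Rightarrow>\<^sub>0 int) \<Rightarrow> ('l \<Rightarrow>\<^sub>0 int)" where
  "push h x = (\<Sum>k\<in>Poly_Mapping.keys x. Poly_Mapping.single (h k) (Poly_Mapping.lookup x k))"

lemma push_expand: "finite X \<Longrightarrow> Poly_Mapping.keys x \<subseteq> X \<Longrightarrow> push h x = (\<Sum>k\<in>X. Poly_Mapping.single (h k) (Poly_Mapping.lookup x k))"
  unfolding push_def by (rule sum.mono_neutral_left) (auto simp: in_keys_iff)

lemma push_add: "push h (x + y) = push h x + push h y"
proof -
  let ?X = "Poly_Mapping.keys x \<union> Poly_Mapping.keys y"
  have "Poly_Mapping.keys (x + y) \<subseteq> ?X" by (rule keys_add)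
  then show ?thesis by (simp add: push_expand[where X="?X"] lookup_add single_add sum.distrib)
qed
lemma push_zero [simp]: "push h 0 = 0" by (simp add: push_def)
lemma push_minus: "push h (- x) = - push h x"
  by (metis add_eq_0_iff push_add push_zero neg_eq_iff_add_eq_0)
lemma push_diff: "push h (x - y) = push h x - push h y"
  by (metis diff_conv_add_uminus push_add push_minus)
lemma push_single: "push h (Poly_Mapping.single k c) = Poly_Mapping.single (h k) c"
  by (simp add: push_expand[where X="{k}"])
lemma push_sum: "push h (sum f A) = (\<Sum>a\<in>A. push h (f a))"
  by (induction A rule: infinite_finite_induct) (auto simp: push_add)
lemma push_cong: "(\<And>k. k \<in> Poly_Mapping.keys x \<Longrightarrow> h k = h' k) \<Longrightarrow> push h x = push h' x"
  by (simp add: push_def)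
lemma push_push: "push h (push g x) = push (\<lambda>k. h (g k)) x"
  by (simp add: push_def[of g] push_sum push_single) (simp add: push_def)

lemma scal_l_push: "scal_l ra b = push (\<lambda>k. (ra (fst k) b, snd k))"
  by (rule ext) (simp add: scal_l_def push_def)

lemma tr_mono: "x \<in> tens_rel ra la N \<Longrightarrow> N \<subseteq> N' \<Longrightarrow> x \<in> tens_rel ra la N'"
  by (induction rule: tens_rel.induct) (auto intro: tens_rel.intros)

lemma span_mono: "x \<in> span_A na T \<Longrightarrow> T \<subseteq> T' \<Longrightarrow> x \<in> span_A na T'"
  by (induction rule: span_A.induct) (auto intro: span_A.intros)

lemma fin_support: "x \<in> tens_rel ra na UNIV \<Longrightarrow> \<exists>T. finite T \<and> x \<in> tens_rel ra na (span_A na T)"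
proof (induction rule: tens_rel.induct)
  case (rel_add_l n p p')
  then show ?case by (intro exI[of _ "{n}"]) (auto intro: tens_rel.intros span_A.intros)
next
  case (rel_add_r n n' p)
  then show ?case by (intro exI[of _ "{n, n'}"]) (auto intro!: tens_rel.intros span_A.intros)
next
  case (rel_bal n p b)
  then show ?case by (intro exI[of _ "{n}"]) (auto intro: tens_rel.intros span_A.intros)
next
  case rel_zero then show ?case by (auto intro: tens_rel.intros)
next
  case (rel_plus x y)
  then obtain T T' where "finite T" "x \<in> tens_rel ra na (span_A na T)" "finite T'" "y \<in> tens_rel ra na (span_A na T')" by blast
  then have "x \<in> tens_rel ra na (span_A na (T \<union> T'))" "y \<in> tens_rel ra na (span_A na (T \<union> T'))"
    by (meson Un_upper1 Un_upper2 span_mono subsetI tr_mono)+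
  then show ?case using \<open>finite T\<close> \<open>finite T'\<close> by (intro exI[of _ "T \<union> T'"]) (auto intro: tens_rel.intros)
next
  case (rel_neg x) then show ?case by (auto intro: tens_rel.intros)
qed

lemma push_rel:
  fixes phi :: "'n::ab_group_add \<Rightarrow> 'n"
  assumes "x \<in> tens_rel pa na N" and "\<forall>n\<in>N. phi n \<in> N1"
    and "\<forall>n\<in>N. \<forall>n'\<in>N. phi (n + n') = phi n + phi n'" and "\<forall>a. \<forall>n\<in>N. phi (na a n) = na a (phi n)"
  shows "push (\<lambda>k. (fst k, phi (snd k))) x \<in> tens_rel pa na N1"
  using assms(1)
proof (induction rule: tens_rel.induct)
  case (rel_add_l n p p')
  then show ?case using assms(2) by (simp add: push_diff push_single tens_rel.rel_add_l)
next
  case (rel_add_r n n' p)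
  then show ?case using assms(2,3) by (simp add: push_diff push_single tens_rel.rel_add_r)
next
  case (rel_bal n p b)
  then show ?case using assms(2,4) by (simp add: push_diff push_single tens_rel.rel_bal)
next
  case rel_zero then show ?case by (simp add: tens_rel.rel_zero)
next
  case (rel_plus x y) then show ?case by (simp add: push_add tens_rel.rel_plus)
next
  case (rel_neg x) then show ?case by (simp add: push_minus tens_rel.rel_neg)
qed



lemma rm_facts:
  assumes "right_module pa"
  shows "pa (x + y) a = pa x a + pa y a" "pa x (a * b) = pa (pa x a) b"
  using assms unfolding right_module_def by blast+

lemma scal_rel:
  assumes rm: "right_module pa" and cen: "central_alg alg" and x: "x \<in> tens_rel pa na N"
  shows "scal_l pa (alg r) x \<in> tens_rel pa na N"
  using x
proof (induction rule: tens_rel.induct)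
  case (rel_add_l n p p')
  then show ?case by (simp add: scal_l_push push_diff push_single rm_facts[OF rm] tens_rel.rel_add_l)
next
  case (rel_add_r n n' p)
  then show ?case by (simp add: scal_l_push push_diff push_single tens_rel.rel_add_r)
next
  case (rel_bal n p b)
  have "pa (pa p b) (alg r) = pa (pa p (alg r)) b"
    using cen unfolding central_alg_def by (metis rm_facts(2)[OF rm])
  then show ?case using rel_bal tens_rel.rel_bal[of n N pa "pa p (alg r)" b na]
    by (simp add: scal_l_push push_diff push_single)
next
  case rel_zero then show ?case by (simp add: scal_l_push tens_rel.rel_zero)
next
  case (rel_plus x y) then show ?case by (simp add: scal_l_push push_add tens_rel.rel_plus)
next
  case (rel_neg x) then show ?case by (simp add: scal_l_push push_minus tens_rel.rel_neg)
qed

lemma torsion: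
  fixes alg :: "'r::idom \<Rightarrow> 'a::ring_1"
  assumes fq: "free_quot (\<lambda>r x. scal_l pa (alg r) x) (tens_sums N1) (tens_rel pa na N1)"
    and rm: "right_module pa" and cen: "central_alg alg" and r: "r \<noteq> 0"
    and z: "z \<in> tens_sums N1" and zr: "scal_l pa (alg r) z \<in> tens_rel pa na N1"
  shows "z \<in> tens_rel pa na N1"
proof -
  let ?K = "tens_rel pa na N1"
  let ?sc = "\<lambda>s x. scal_l pa (alg s) x"
  obtain BB where BB: "BB \<subseteq> tens_sums N1"
    and sp: "\<forall>x\<in>tens_sums N1. \<exists>c. finite {b\<in>BB. c b \<noteq> 0} \<and> x - (\<Sum>b\<in>{b\<in>BB. c b \<noteq> 0}. ?sc (c b) b) \<in> ?K"
    and ind: "\<forall>c. finite {b\<in>BB. c b \<noteq> 0} \<longrightarrow> (\<Sum>b\<in>{b\<in>BB. c b \<noteq> 0}. ?sc (c b) b) \<in> ?K \<longrightarrow> (\<forall>b\<in>BB. c b = 0)"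
    using fq unfolding free_quot_def by blast
  obtain c where c1: "finite {b\<in>BB. c b \<noteq> 0}" and c2: "z - (\<Sum>b\<in>{b\<in>BB. c b \<noteq> 0}. ?sc (c b) b) \<in> ?K"
    using sp z by blast
  let ?C = "{b\<in>BB. c b \<noteq> 0}"
  have algm: "alg (s * r) = alg s * alg r" for s using cen unfolding central_alg_def by blast
  have comp: "?sc r (?sc s x) = ?sc (s * r) x" for s x
    by (simp add: scal_l_push push_push rm_facts(2)[OF rm, symmetric] algm)
  have "?sc r (z - (\<Sum>b\<in>?C. ?sc (c b) b)) \<in> ?K" by (rule scal_rel[OF rm cen c2])
  then have "?sc r z - (\<Sum>b\<in>?C. ?sc (c b * r) b) \<in> ?K"
    by (simp add: scal_l_push push_diff push_sum push_push rm_facts(2)[OF rm, symmetric] algm)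
  then have S: "(\<Sum>b\<in>?C. ?sc (c b * r) b) \<in> ?K"
    using tr_diff[OF zr] by fastforce
  have eq: "{b\<in>BB. c b * r \<noteq> 0} = ?C" using r by auto
  have h1: "finite {b\<in>BB. c b * r \<noteq> 0}" using c1 eq by simp
  have h2: "(\<Sum>b\<in>{b\<in>BB. c b * r \<noteq> 0}. ?sc (c b * r) b) \<in> ?K" using S eq by simp
  have "\<forall>b\<in>BB. c b * r = 0" using ind[rule_format, of "\<lambda>b. c b * r", OF h1 h2] by blast
  then have "?C = {}" using r by auto
  then have "(\<Sum>b\<in>?C. ?sc (c b) b) = 0" by (simp only: sum.empty)
  then show ?thesis using c2 by simp
qed



lemma single_diff_rel:
  assumes "Poly_Mapping.single a 1 - Poly_Mapping.single b 1 \<in> tens_rel ra la N"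
  shows "Poly_Mapping.single a c - Poly_Mapping.single b c \<in> tens_rel ra la N"
proof -
  have "frag_cmul c (Poly_Mapping.single a 1 - Poly_Mapping.single b 1) = Poly_Mapping.single a c - Poly_Mapping.single b c"
    by (rule poly_mapping_eqI) (simp add: lookup_minus lookup_single when_def)
  then show ?thesis using tr_cmul[OF assms, of c] by simp
qed

lemma key:
  fixes alg :: "'r::idom \<Rightarrow> 'a::ring_1"
    and pa :: "'p::ab_group_add \<Rightarrow> 'a \<Rightarrow> 'p"
    and na :: "'a \<Rightarrow> 'n::ab_group_add \<Rightarrow> 'n"
    and N1 :: "'n set"
  assumes cen: "central_alg alg"
    and rm: "right_module pa"
    and lm: "left_module na"
    and sub: "left_submodule na N1"
    and ss: "base_change_semisimple alg"
    and f2: "free_quot (\<lambda>r x. na (alg r) x) UNIV {0}"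
    and f1: "free_quot (\<lambda>r x. scal_l pa (alg r) x) (tens_sums N1) (tens_rel pa na N1)"
    and z: "z \<in> tens_sums N1" and z2: "z \<in> tens_rel pa na UNIV"
  shows "z \<in> tens_rel pa na N1"
proof -
  obtain B where spB: "\<forall>x\<in>UNIV. \<exists>c. finite {b\<in>B. c b \<noteq> 0} \<and> x - (\<Sum>b\<in>{b\<in>B. c b \<noteq> 0}. na (alg (c b)) b) \<in> {0}"
    and indB: "\<forall>c. finite {b\<in>B. c b \<noteq> 0} \<longrightarrow> (\<Sum>b\<in>{b\<in>B. c b \<noteq> 0}. na (alg (c b)) b) \<in> {0} \<longrightarrow> (\<forall>b\<in>B. c b = 0)"
    using f2 unfolding free_quot_def by blast
  interpret fmod alg na B
  proof
    show "central_alg alg" by (rule cen)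
    show "left_module na" by (rule lm)
    show "\<exists>c. finite {b\<in>B. c b \<noteq> 0} \<and> x - (\<Sum>b\<in>{b\<in>B. c b \<noteq> 0}. na (alg (c b)) b) \<in> {0}" for x
      using spB by blast
    show "finite {b\<in>B. c b \<noteq> 0} \<Longrightarrow> (\<Sum>b\<in>{b\<in>B. c b \<noteq> 0}. na (alg (c b)) b) \<in> {0} \<Longrightarrow> \<forall>b\<in>B. c b = 0" for c
      using indB by blast
  qed
  obtain T where T: "finite T" "z \<in> tens_rel pa na (span_A na T)" using fin_support[OF z2] by blast
  obtain ts where ts: "set ts = T \<union> snd ` Poly_Mapping.keys z"
    using finite_list[of "T \<union> snd ` Poly_Mapping.keys z"] T(1) by auto
  let ?SP = "span_A na (set ts)"
  have zsp: "z \<in> tens_rel pa na ?SP"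
    using T(2) by (rule tr_mono) (auto intro: span_mono simp: ts)
  obtain r phi where r: "r \<noteq> 0" and p1: "\<forall>n\<in>?SP. phi n \<in> N1"
    and p2: "\<forall>n\<in>?SP. \<forall>n'\<in>?SP. phi (n + n') = phi n + phi n'"
    and p3: "\<forall>a. \<forall>n\<in>?SP. phi (na a n) = na a (phi n)"
    and p4: "\<forall>n\<in>N1 \<inter> ?SP. phi n = na (alg r) n"
    using exists_phi[OF ss sub, of ts] by blast
  have Pz: "push (\<lambda>k. (fst k, phi (snd k))) z \<in> tens_rel pa na N1"
    by (rule push_rel[OF zsp p1 p2 p3])
  have kN1: "snd k \<in> N1" if "k \<in> Poly_Mapping.keys z" for k
    using z that unfolding tens_sums_def by auto
  have kSP: "snd k \<in> ?SP" if "k \<in> Poly_Mapping.keys z" for k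
    using that by (intro span_A.sp_gen) (auto simp: ts)
  have Pz2: "push (\<lambda>k. (fst k, phi (snd k))) z = push (\<lambda>k. (fst k, na (alg r) (snd k))) z"
    by (rule push_cong) (use kN1 kSP p4 in auto)
  have D: "scal_l pa (alg r) z - push (\<lambda>k. (fst k, na (alg r) (snd k))) z \<in> tens_rel pa na N1"
  proof -
    have "scal_l pa (alg r) z - push (\<lambda>k. (fst k, na (alg r) (snd k))) z =
      (\<Sum>k\<in>Poly_Mapping.keys z. Poly_Mapping.single (pa (fst k) (alg r), snd k) (Poly_Mapping.lookup z k)
         - Poly_Mapping.single (fst k, na (alg r) (snd k)) (Poly_Mapping.lookup z k))"
      by (simp add: scal_l_push push_def sum_subtractf)
    also have "\<dots> \<in> tens_rel pa na N1"
      by (rule tr_sum, rule single_diff_rel, rule tens_rel.rel_bal, rule kN1)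
    finally show ?thesis .
  qed
  have "scal_l pa (alg r) z \<in> tens_rel pa na N1"
    using tens_rel.rel_plus[OF D Pz] Pz2 by simp
  then show ?thesis by (rule torsion[OF f1 rm cen r z])
qed

theorem mainTheorem6:
  fixes alg :: "'r::idom \<Rightarrow> 'a::ring_1"
    and pa :: "'p::ab_group_add \<Rightarrow> 'a \<Rightarrow> 'p"
    and na :: "'a \<Rightarrow> 'n::ab_group_add \<Rightarrow> 'n"
    and N1 :: "'n set"
  assumes "central_alg alg"
    and "right_module pa"
    and "left_module na"
    and "left_submodule na N1"
    and "base_change_semisimple alg"
    and "free_quot (\<lambda>r x. na (alg r) x) UNIV {0}"
    and "free_quot (\<lambda>r x. scal_l pa (alg r) x) (tens_sums N1) (tens_rel pa na N1)"
  shows "inj_on (tensor_incl pa na UNIV) (tensor pa na N1)"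
proof (rule inj_onI)
  let ?K1 = "tens_rel pa na N1" and ?K2 = "tens_rel pa na UNIV"
  have K12: "?K1 \<subseteq> ?K2" by (auto intro: tr_mono)
  have incl: "tensor_incl pa na UNIV ((+) x ` ?K1) = (+) x ` ?K2" for x
  proof
    show "tensor_incl pa na UNIV ((+) x ` ?K1) \<subseteq> (+) x ` ?K2"
    proof
      fix w assume "w \<in> tensor_incl pa na UNIV ((+) x ` ?K1)"
      then obtain k1 k2 where kk: "k1 \<in> ?K1" "k2 \<in> ?K2" "w = x + k1 + k2"
        unfolding tensor_incl_def by blast
      have "k1 + k2 \<in> ?K2" using K12 kk(1,2) tens_rel.rel_plus by blast
      moreover have "w = x + (k1 + k2)" using kk(3) by (simp add: add.assoc)
      ultimately show "w \<in> (+) x ` ?K2" by blast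
    qed
    show "(+) x ` ?K2 \<subseteq> tensor_incl pa na UNIV ((+) x ` ?K1)"
    proof
      fix w assume "w \<in> (+) x ` ?K2"
      then obtain k2 where "k2 \<in> ?K2" "w = x + k2" by blast
      moreover have "x + 0 \<in> (+) x ` ?K1" using tens_rel.rel_zero by blast
      ultimately show "w \<in> tensor_incl pa na UNIV ((+) x ` ?K1)"
        unfolding tensor_incl_def by force
    qed
  qed
  fix C1 C2 assume C1: "C1 \<in> tensor pa na N1" and C2: "C2 \<in> tensor pa na N1"
    and eq: "tensor_incl pa na UNIV C1 = tensor_incl pa na UNIV C2"
  obtain x where x: "x \<in> tens_sums N1" "C1 = (+) x ` ?K1" using C1 unfolding tensor_def by blast
  obtain y where y: "y \<in> tens_sums N1" "C2 = (+) y ` ?K1" using C2 unfolding tensor_def by blast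
  have "(+) x ` ?K2 = (+) y ` ?K2" using eq x y incl by simp
  moreover have "x \<in> (+) x ` ?K2" using tens_rel.rel_zero[of pa na UNIV] by (metis add_0_right image_eqI)
  ultimately obtain k where k: "k \<in> ?K2" "x = y + k" by auto
  have dK2: "x - y \<in> ?K2" using k by simp
  have dS: "x - y \<in> tens_sums N1"
    using x(1) y(1) keys_diff[of x y] unfolding tens_sums_def by auto
  have dK1: "x - y \<in> ?K1" by (rule key[OF assms dS dK2])
  show "C1 = C2"
  proof
    show "C1 \<subseteq> C2"
    proof
      fix w assume "w \<in> C1"
      then obtain k where "k \<in> ?K1" "w = x + k" using x by blast
      then have "w = y + ((x - y) + k)" "(x - y) + k \<in> ?K1" using dK1 tens_rel.rel_plus by auto
      then show "w \<in> C2" using y by blast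
    qed
    show "C2 \<subseteq> C1"
    proof
      fix w assume "w \<in> C2"
      then obtain k where "k \<in> ?K1" "w = y + k" using y by blast
      then have "w = x + (k - (x - y))" "k - (x - y) \<in> ?K1" using dK1 tr_diff by auto
      then show "w \<in> C1" using x by blast
    qed
  qed
qed


end
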